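(* As formal power series in $w,x,y,z$, $$Q(w,x,y,z):=\sum_{k\ge1}\sum_{j=0}^k\sum_{a=0}^jq_{k,j,a}(w)\,x^ky^jz^a=\frac{xy\,(-w^2x^2+wx^2z+wx^2+2wx+z)}{(wx^2y+wx^2+xyz+wx-x-1)(wx-1)(x+1)}.$$
   Context: For $k\ge1$ and a nonempty $S=\{s_1<\dots<s_j\}\subseteq[k]$, define $p_1(S)=s_2-s_1,\dots,p_{j-1}(S)=s_j-s_{j-1}$, $p_j(S)=k+s_1-s_j$. For $1\le j\le k$ and $0\le a\le j$ define $$q_{k,j,a}(x)=\sum_{S\subseteq[k],\,|S|=j}\ \sum_{A\subseteq[j],\,|A|=a}\ \prod_{i=1}^j\Big(\sum_{b=0}^{p_i(S)-1}(-1)^{p_i(S)-1-b}x^b+(-1)^{p_i(S)}\mathbf 1\{i\notin A\}\Big),$$ and set $q_{k,0,0}=0$ and $q_{k,j,a}=0$ when $a>j$. *)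

theory Defs
  imports Main "HOL-Computational_Algebra.Polynomial" "HOL-Computational_Algebra.Formal_Power_Series"
    "HOL-Computational_Algebra.Polynomial_FPS"
begin

text \<open>The gaps p_i(S), i = 1..j, of a nonempty S \<subseteq> [k] (1-based index i).\<close>
definition gap :: "nat \<Rightarrow> nat set \<Rightarrow> nat \<Rightarrow> nat" where
  "gap k S i = (let s = sorted_list_of_set S; j = card S in
     if i < j then s ! i - s ! (i - 1) else k + s ! 0 - s ! (j - 1))"

definition qfactor :: "nat \<Rightarrow> bool \<Rightarrow> real poly" where
  "qfactor p notinA = (\<Sum>b<p. monom ((-1) ^ (p - 1 - b)) b) + [:(-1) ^ p * (if notinA then 1 else 0):]"

definition q :: "nat \<Rightarrow> nat \<Rightarrow> nat \<Rightarrow> real poly" where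
  "q k j a = (if j = 0 \<or> a > j then 0 else
     (\<Sum>S\<in>{S. S \<subseteq> {1..k} \<and> card S = j}.
        \<Sum>A\<in>{A. A \<subseteq> {1..j} \<and> card A = a}.
          \<Prod>i\<in>{1..j}. qfactor (gap k S i) (i \<notin> A)))"

text \<open>Four-variable formal power series, realised as nested power series
  R[[w]][[x]][[y]][[z]]; the outermost variable is z, the innermost w.\<close>
type_synonym fps4 = "real fps fps fps fps"

definition fZ :: fps4 where "fZ = fps_X"
definition fY :: fps4 where "fY = fps_const fps_X"
definition fX :: fps4 where "fX = fps_const (fps_const fps_X)"
definition fW :: fps4 where "fW = fps_const (fps_const (fps_const fps_X))"

definition Qser :: fps4 where
  "Qser = Abs_fps (\<lambda>a. Abs_fps (\<lambda>j. Abs_fps (\<lambda>k.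
      if 1 \<le> k \<and> j \<le> k \<and> a \<le> j then fps_of_poly (q k j a) else 0)))"

end

theory Submission
  imports Defs
begin

unbundle fps_syntax

lemma sl_set: "sorted_wrt (<) L \<Longrightarrow> sorted_list_of_set (set L) = L"
proof -
  assume a: "sorted_wrt (<) L"
  then have "distinct L" using strict_sorted_iff by blast
  then have "length L = card (set L)" by (simp add: distinct_card)
  then show ?thesis using sorted_list_of_set_unique[of "set L" L] a by blast
qed

definition Sets :: "nat \<Rightarrow> nat \<Rightarrow> nat set set" where
  "Sets k n = {S. S \<subseteq> {1..k} \<and> card S = n}"

definition Lists :: "nat \<Rightarrow> nat \<Rightarrow> nat list set" where
  "Lists k n = {L. sorted_wrt (<) L \<and> length L = n \<and> set L \<subseteq> {1..k}}"

definition lgap :: "nat \<Rightarrow> nat list \<Rightarrow> nat \<Rightarrow> nat" where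
  "lgap k L i = (if i < length L then L ! i - L ! (i - 1) else k + L ! 0 - L ! (length L - 1))"

lemma gap_set: "sorted_wrt (<) L \<Longrightarrow> gap k (set L) = lgap k L"
proof -
  assume a: "sorted_wrt (<) L"
  then have "distinct L" using strict_sorted_iff by blast
  then have c: "card (set L) = length L" by (simp add: distinct_card)
  show ?thesis unfolding gap_def lgap_def Let_def c sl_set[OF a] ..
qed

lemma Sets_image: "Sets k n = set ` Lists k n"
proof
  show "Sets k n \<subseteq> set ` Lists k n"
  proof
    fix S assume "S \<in> Sets k n"
    then have S: "S \<subseteq> {1..k}" "card S = n" by (auto simp: Sets_def)
    then have fin: "finite S" using finite_subset by blast
    have "sorted_list_of_set S \<in> Lists k n"
      using S fin by (auto simp: Lists_def)
    moreover have "S = set (sorted_list_of_set S)" using fin by simp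
    ultimately show "S \<in> set ` Lists k n" by blast
  qed
next
  show "set ` Lists k n \<subseteq> Sets k n"
    by (auto simp: Lists_def Sets_def distinct_card strict_sorted_iff)
qed

lemma inj_set_Lists: "inj_on set (Lists k n)"
proof (rule inj_onI)
  fix x y assume "x \<in> Lists k n" "y \<in> Lists k n" "set x = set y"
  then have "sorted_wrt (<) x" "sorted_wrt (<) y" by (simp_all add: Lists_def)
  then have "sorted_list_of_set (set x) = x" "sorted_list_of_set (set y) = y" by (simp_all add: sl_set)
  then show "x = y" using \<open>set x = set y\<close> by metis
qed

lemma sum_Sets_Lists:
  "(\<Sum>S\<in>Sets k n. F (gap k S)) = (\<Sum>L\<in>Lists k n. F (lgap k L))"
proof -
  have "(\<Sum>S\<in>Sets k n. F (gap k S)) = (\<Sum>L\<in>Lists k n. F (gap k (set L)))"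
    unfolding Sets_image by (rule sum.reindex[OF inj_set_Lists, unfolded comp_def])
  also have "\<dots> = (\<Sum>L\<in>Lists k n. F (lgap k L))"
    by (rule sum.cong) (auto simp: Lists_def gap_set)
  finally show ?thesis .
qed

lemma finite_Lists: "finite (Lists k n)"
proof -
  have "Lists k n \<subseteq> {xs. set xs \<subseteq> {1..k} \<and> length xs = n}" by (auto simp: Lists_def)
  then show ?thesis using finite_lists_length_eq[of "{1..k}" n] finite_subset by blast
qed

definition alphaL :: "nat \<times> nat list \<Rightarrow> nat list" where
  "alphaL x = (snd x) ! 0 # map (\<lambda>t. t + fst x) (snd x)"

definition betaL :: "nat list \<Rightarrow> nat \<times> nat list" where
  "betaL L = (L ! 1 - L ! 0, map (\<lambda>t. t - (L ! 1 - L ! 0)) (tl L))"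

definition SigmaL :: "nat \<Rightarrow> nat \<Rightarrow> (nat \<times> nat list) set" where
  "SigmaL k j = Sigma {1..<k} (\<lambda>p. Lists (k - p) j)"

lemma sorted_map_minus: "sorted_wrt (<) (R::nat list) \<Longrightarrow> (\<forall>t\<in>set R. p < t) \<Longrightarrow> sorted_wrt (<) (map (\<lambda>t. t - p) R)"
proof -
  assume a: "sorted_wrt (<) R" "\<forall>t\<in>set R. p < t"
  have "sorted_wrt (\<lambda>x y. x - p < y - p) R"
  proof (rule sorted_wrt_mono_rel[OF _ a(1)])
    fix x y assume "x \<in> set R" "x < y"
    then have "p < x" using a(2) by blast
    then show "x - p < y - p" using \<open>x < y\<close> by linarith
  qed
  then show ?thesis by (simp add: sorted_wrt_map)
qed

lemma sorted_map_plus: "sorted_wrt (<) (R::nat list) \<Longrightarrow> sorted_wrt (<) (map (\<lambda>t. t + p) R)"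
  by (simp add: sorted_wrt_map)

lemma alpha_props:
  assumes j: "j \<ge> 1" and x: "(p, M) \<in> SigmaL k j"
  shows "betaL (alphaL (p, M)) = (p, M)" "alphaL (p, M) \<in> Lists k (Suc j)"
    "lgap k (alphaL (p, M)) 1 = p" "\<And>i. i \<in> {1..j} \<Longrightarrow> lgap k (alphaL (p, M)) (Suc i) = lgap (k - p) M i"
proof -
  from x have p: "1 \<le> p" "p < k" and M: "sorted_wrt (<) M" "length M = j" "set M \<subseteq> {1..k-p}"
    by (auto simp: SigmaL_def Lists_def)
  from M(2) j obtain m M' where MM: "M = m # M'" by (cases M) auto
  from M MM have m: "1 \<le> m" "m \<le> k - p" "\<forall>t\<in>set M'. m < t \<and> t \<le> k - p" "sorted_wrt (<) M'"
    by auto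
  have aL: "alphaL (p, M) = m # map (\<lambda>t. t + p) M" by (simp add: alphaL_def MM)
  show "betaL (alphaL (p, M)) = (p, M)"
    unfolding aL by (simp add: betaL_def MM comp_def)
  show "alphaL (p, M) \<in> Lists k (Suc j)"
    unfolding aL using m p M(2) sorted_map_plus[OF m(4), of p] by (auto simp: Lists_def MM)
  show "lgap k (alphaL (p, M)) 1 = p"
    unfolding aL using M(2) j by (simp add: lgap_def MM)
  fix i assume i: "i \<in> {1..j}"
  show "lgap k (alphaL (p, M)) (Suc i) = lgap (k - p) M i"
  proof (cases "i < j")
    case True
    then obtain i' where i': "i = Suc i'" using i by (cases i) auto
    show ?thesis unfolding aL using True M(2) by (simp add: lgap_def i')
  next
    case False
    then have ij: "i = j" using i by auto
    have "M ! (j - 1) \<in> set M" using M(2) j by simp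
    then have le: "M ! (j - 1) \<le> k - p" using M(3) by auto
    have L: "(m # map (\<lambda>t. t + p) M) ! j = M ! (j - 1) + p"
      using M(2) j by (cases j) auto
    show ?thesis unfolding aL ij using M(2) le p L by (simp add: lgap_def MM)
  qed
qed

lemma beta_props:
  assumes j: "j \<ge> 1" and L: "L \<in> Lists k (Suc j)"
  shows "alphaL (betaL L) = L" "betaL L \<in> SigmaL k j"
proof -
  from L have L1: "sorted_wrt (<) L" "length L = Suc j" "set L \<subseteq> {1..k}"
    by (auto simp: Lists_def)
  obtain x0 x1 R where LL: "L = x0 # x1 # R"
  proof (cases L)
    case Nil with L1(2) show ?thesis by simp
  next
    case (Cons x0 L')
    show ?thesis
    proof (cases L')
      case Nil with Cons L1(2) j show ?thesis by simp
    next
      case (Cons x1 R) with \<open>L = x0 # L'\<close> that show ?thesis by blast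
    qed
  qed
  from L1 LL have h: "x0 < x1" "\<forall>t\<in>set R. x1 < t \<and> t \<le> k" "1 \<le> x0" "x1 \<le> k" "sorted_wrt (<) R" "length R = j - 1"
    by auto
  define p where "p = x1 - x0"
  have b: "betaL L = (p, x0 # map (\<lambda>t. t - p) R)"
    using h(1) by (simp add: betaL_def LL p_def)
  have mp: "map (\<lambda>t. t - p + p) R = R"
  proof (rule map_idI)
    fix t assume "t \<in> set R"
    then have "x1 < t" using h(2) by blast
    then show "t - p + p = t" using h(1) unfolding p_def by linarith
  qed
  show "alphaL (betaL L) = L"
  proof -
    have x0p: "x0 + p = x1" using h(1) by (simp add: p_def)
    show ?thesis unfolding b by (simp add: alphaL_def LL mp comp_def x0p)
  qed
  have s: "sorted_wrt (<) (map (\<lambda>t. t - p) R)"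
    by (rule sorted_map_minus[OF h(5)]) (use h(2) h(1) in \<open>auto simp: p_def\<close>)
  show "betaL L \<in> SigmaL k j"
  proof -
    have r: "1 \<le> t - p \<and> t - p \<le> k - p" if "t \<in> set R" for t
    proof -
      from that h(2) have "x1 < t" "t \<le> k" by auto
      then show ?thesis using h(1) h(3) unfolding p_def by linarith
    qed
    have hp: "1 \<le> p" "p < k" "x0 \<le> k - p" "x0 < t - p" if "t \<in> set R" for t
    proof -
      from that h(2) have "x1 < t" "t \<le> k" by auto
      then show "1 \<le> p" "p < k" "x0 \<le> k - p" "x0 < t - p" using h(1) h(3) unfolding p_def by linarith+
    qed
    have hp2: "1 \<le> p" "p < k" "x0 \<le> k - p" using h(1) h(3) h(4) unfolding p_def by linarith+
    show ?thesis
      unfolding b SigmaL_def Lists_def using h(6) s j hp2 h(3) by (auto dest: r hp(4))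
  qed
qed

lemma Bij:
  fixes \<Phi> :: "nat \<Rightarrow> (nat \<Rightarrow> nat) \<Rightarrow> 'b::comm_monoid_add"
  assumes j: "j \<ge> 1" and cong: "\<And>p g g'. (\<And>i. i \<in> {1..j} \<Longrightarrow> g i = g' i) \<Longrightarrow> \<Phi> p g = \<Phi> p g'"
  shows "(\<Sum>S\<in>Sets k (Suc j). \<Phi> (gap k S 1) (\<lambda>i. gap k S (Suc i)))
       = (\<Sum>p\<in>{1..<k}. \<Sum>S\<in>Sets (k-p) j. \<Phi> p (gap (k-p) S))"
proof -
  have "(\<Sum>S\<in>Sets k (Suc j). \<Phi> (gap k S 1) (\<lambda>i. gap k S (Suc i)))
      = (\<Sum>L\<in>Lists k (Suc j). \<Phi> (lgap k L 1) (\<lambda>i. lgap k L (Suc i)))"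
    using sum_Sets_Lists[of "\<lambda>g. \<Phi> (g 1) (\<lambda>i. g (Suc i))" k "Suc j"] by simp
  also have "\<dots> = (\<Sum>x\<in>SigmaL k j. \<Phi> (fst x) (lgap (k - fst x) (snd x)))"
  proof (rule sum.reindex_bij_witness[where i = alphaL and j = betaL])
    fix L assume L: "L \<in> Lists k (Suc j)"
    show "alphaL (betaL L) = L" "betaL L \<in> SigmaL k j" using beta_props[OF j L] by auto
    obtain p M where pM: "betaL L = (p, M)" by (cases "betaL L") auto
    have mem: "(p, M) \<in> SigmaL k j" using beta_props[OF j L] pM by simp
    have LL: "L = alphaL (p, M)" using beta_props[OF j L] pM by simp
    have "\<Phi> p (lgap (k - p) M) = \<Phi> (lgap k L 1) (\<lambda>i. lgap k L (Suc i))"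
      unfolding LL alpha_props(3)[OF j mem]
      by (rule cong) (simp add: alpha_props(4)[OF j mem])
    then show "\<Phi> (fst (betaL L)) (lgap (k - fst (betaL L)) (snd (betaL L))) = \<Phi> (lgap k L 1) (\<lambda>i. lgap k L (Suc i))"
      using pM by simp
  next
    fix x assume x: "x \<in> SigmaL k j"
    obtain p M where pM: "x = (p, M)" by (cases x) auto
    show "betaL (alphaL x) = x" "alphaL x \<in> Lists k (Suc j)"
      using alpha_props(1,2)[OF j x[unfolded pM]] pM by auto
  qed
  also have "\<dots> = (\<Sum>p\<in>{1..<k}. \<Sum>M\<in>Lists (k-p) j. \<Phi> p (lgap (k-p) M))"
    unfolding SigmaL_def by (subst sum.Sigma) (auto simp: finite_Lists case_prod_beta)
  also have "\<dots> = (\<Sum>p\<in>{1..<k}. \<Sum>S\<in>Sets (k-p) j. \<Phi> p (gap (k-p) S))"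
    by (rule sum.cong[OF refl]) (rule sum_Sets_Lists[symmetric])
  finally show ?thesis .
qed

definition Wf :: "nat \<Rightarrow> (nat \<Rightarrow> nat) \<Rightarrow> nat \<Rightarrow> real poly" where
  "Wf j g a = (\<Sum>A\<in>{A. A \<subseteq> {1..j} \<and> card A = a}. \<Prod>i\<in>{1..j}. qfactor (g i) (i \<notin> A))"

lemma card_le_ivl: "A \<subseteq> {1..j} \<Longrightarrow> card A \<le> j"
proof -
  assume "A \<subseteq> {1..j}"
  then have "card A \<le> card {1..j}" by (intro card_mono) auto
  then show ?thesis by simp
qed

lemma Wf_big: "j < a \<Longrightarrow> Wf j g a = 0"
proof -
  assume ja: "j < a"
  have "False" if "A \<subseteq> {1..j}" "card A = a" for A
    using card_le_ivl[OF that(1)] that(2) ja by simp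
  then have "{A. A \<subseteq> {1..j} \<and> card A = a} = {}" by blast
  then show ?thesis unfolding Wf_def by (simp only: sum.empty)
qed

lemma q_W: "q k j a = (if j = 0 then 0 else \<Sum>S\<in>Sets k j. Wf j (gap k S) a)"
proof (cases "j = 0 \<or> a > j")
  case True
  show ?thesis
  proof (cases "j = 0")
    case True then show ?thesis unfolding q_def by simp
  next
    case False
    then have "a > j" using \<open>j = 0 \<or> a > j\<close> by simp
    then show ?thesis unfolding q_def using False by (simp add: Wf_big)
  qed
next
  case False
  then have "\<not> (j = 0 \<or> a > j)" by simp
  then have "j \<noteq> 0" by simp
  then show ?thesis unfolding q_def Sets_def Wf_def using \<open>\<not> (j = 0 \<or> a > j)\<close> by (simp only: if_False)
qed

lemma Wf_0: "Wf 0 g a = (if a = 0 then 1 else 0)"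
proof (cases "a = 0")
  case True
  have "{A. A \<subseteq> {1..0::nat} \<and> card A = a} = {{}}" using True by auto
  then show ?thesis using True unfolding Wf_def by simp
next
  case False
  then show ?thesis by (simp add: Wf_big)
qed

lemma Wf_cong: "(\<And>i. i \<in> {1..j} \<Longrightarrow> g i = g' i) \<Longrightarrow> Wf j g a = Wf j g' a"
  unfolding Wf_def by (intro sum.cong refl prod.cong) auto

lemma prod_split1: "(\<Prod>i\<in>{1..Suc j}. f i) = f 1 * (\<Prod>i\<in>{1..j}. f (Suc i))"
proof -
  have "(\<Prod>i\<in>{1..Suc j}. f i) = f 1 * (\<Prod>i\<in>{Suc 1..Suc j}. f i)"
    by (rule prod.atLeast_Suc_atMost) simp
  also have "(\<Prod>i\<in>{Suc 1..Suc j}. f i) = (\<Prod>i\<in>{1..j}. f (Suc i))"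
    by (rule prod.shift_bounds_cl_Suc_ivl)
  finally show ?thesis .
qed

lemma h1: "0 \<notin> A \<Longrightarrow> Suc ` ((\<lambda>x. x - 1) ` A) = (A::nat set)"
proof -
  assume a: "0 \<notin> A"
  have "Suc ` ((\<lambda>x. x - 1) ` A) = (\<lambda>x. Suc (x - 1)) ` A" by (simp add: image_image)
  also have "\<dots> = (\<lambda>x. x) ` A"
  proof (rule image_cong[OF refl])
    fix x assume "x \<in> A"
    then have "x \<noteq> 0" using a by metis
    then show "Suc (x - 1) = x" by simp
  qed
  finally show ?thesis by simp
qed

lemma h2: "0 \<notin> A \<Longrightarrow> card ((\<lambda>x. x - 1) ` A) = card (A::nat set)"
proof -
  assume a: "0 \<notin> A"
  have "inj_on (\<lambda>x. x - 1) A"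
  proof (rule inj_onI)
    fix x y assume "x \<in> A" "y \<in> A" "x - 1 = y - 1"
    then show "x = y" using a by (cases x; cases y) auto
  qed
  then show ?thesis by (rule card_image)
qed

lemma h3: "(\<lambda>x. x - 1) ` (Suc ` B) = (B::nat set)"
  by (simp add: image_image)

lemma Suc_mem_image: "Suc i \<in> Suc ` B \<longleftrightarrow> i \<in> B"
  by auto

lemma Wf_Suc: "Wf (Suc j) g a = qfactor (g 1) True * Wf j (\<lambda>i. g (Suc i)) a
   + (if a = 0 then 0 else qfactor (g 1) False * Wf j (\<lambda>i. g (Suc i)) (a - 1))"
proof -
  define U where "U = {A. A \<subseteq> {1..Suc j} \<and> card A = a}"
  define V where "V b = {A. A \<subseteq> {1..j} \<and> card A = b}" for b
  define F where "F A = (\<Prod>i\<in>{1..Suc j}. qfactor (g i) (i \<notin> A))" for A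
  define G where "G A = (\<Prod>i\<in>{1..j}. qfactor (g (Suc i)) (i \<notin> A))" for A
  have finU: "finite U"
    by (rule finite_subset[of _ "Pow {1..Suc j}"]) (auto simp: U_def)
  have WS: "Wf j (\<lambda>i. g (Suc i)) b = sum G (V b)" for b by (simp add: Wf_def V_def G_def)
  have "Wf (Suc j) g a = sum F U" by (simp add: Wf_def U_def F_def)
  also have "\<dots> = sum F (U \<inter> {A. 1 \<notin> A}) + sum F (U - {A. 1 \<notin> A})"
    by (rule sum.Int_Diff[OF finU])
  also have "sum F (U \<inter> {A. 1 \<notin> A}) = qfactor (g 1) True * Wf j (\<lambda>i. g (Suc i)) a"
  proof -
    have "(\<Sum>B\<in>V a. qfactor (g 1) True * G B) = sum F (U \<inter> {A. 1 \<notin> A})"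
    proof (rule sum.reindex_bij_witness[where j = "\<lambda>B. Suc ` B" and i = "\<lambda>A. (\<lambda>x. x - 1) ` A"])
      fix B assume B: "B \<in> V a"
      show "(\<lambda>x. x - 1) ` (Suc ` B) = B" by (rule h3)
      show "Suc ` B \<in> U \<inter> {A. 1 \<notin> A}"
        using B by (auto simp: U_def V_def card_image)
      have "F (Suc ` B) = qfactor (g 1) True * G B"
      proof -
        have "0 \<notin> B" using B by (auto simp: V_def)
        then have "1 \<notin> Suc ` B" by auto
        then show ?thesis unfolding F_def G_def prod_split1 by (simp add: Suc_mem_image)
      qed
      then show "F (Suc ` B) = qfactor (g 1) True * G B" .
    next
      fix A assume A: "A \<in> U \<inter> {A. 1 \<notin> A}"
      then have A0: "0 \<notin> A" by (auto simp: U_def)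
      show "Suc ` ((\<lambda>x. x - 1) ` A) = A" by (rule h1[OF A0])
      show "(\<lambda>x. x - 1) ` A \<in> V a"
      proof -
        have "(\<lambda>x. x - 1) ` A \<subseteq> {1..j}"
        proof
          fix y assume "y \<in> (\<lambda>x. x - 1) ` A"
          then obtain x where x: "x \<in> A" "y = x - 1" by blast
          then have "x \<in> {1..Suc j}" "x \<noteq> 1" using A by (auto simp: U_def)
          then show "y \<in> {1..j}" using x by auto
        qed
        moreover have "card ((\<lambda>x. x - 1) ` A) = a" using h2[OF A0] A by (simp add: U_def)
        ultimately show ?thesis by (simp add: V_def)
      qed
    qed
    then show ?thesis by (simp add: WS sum_distrib_left)
  qed
  also have "sum F (U - {A. 1 \<notin> A}) = (if a = 0 then 0 else qfactor (g 1) False * Wf j (\<lambda>i. g (Suc i)) (a - 1))"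
  proof (cases "a = 0")
    case True
    have e: "U - {A. 1 \<notin> A} = {}"
    proof -
      have "A = {}" if "A \<in> U" for A
      proof -
        have "finite A" using that finite_subset[of A "{1..Suc j}"] by (auto simp: U_def)
        then show ?thesis using that True by (simp add: U_def)
      qed
      then show ?thesis by auto
    qed
    show ?thesis unfolding e using True by simp
  next
    case False
    have "(\<Sum>B\<in>V (a - 1). qfactor (g 1) False * G B) = sum F (U - {A. 1 \<notin> A})"
    proof (rule sum.reindex_bij_witness[where j = "\<lambda>B. insert 1 (Suc ` B)" and i = "\<lambda>A. (\<lambda>x. x - 1) ` (A - {1})"])
      fix B assume B: "B \<in> V (a - 1)"
      have B1: "1 \<notin> Suc ` B" using B by (auto simp: V_def)
      have finB: "finite B" using B finite_subset[of B "{1..j}"] by (auto simp: V_def)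
      have e: "insert 1 (Suc ` B) - {1} = Suc ` B" using B1 by blast
      show "(\<lambda>x. x - 1) ` (insert 1 (Suc ` B) - {1}) = B" unfolding e by (rule h3)
      have "card (insert 1 (Suc ` B)) = a"
        using B1 finB B False by (simp add: card_image V_def)
      then show "insert 1 (Suc ` B) \<in> U - {A. 1 \<notin> A}"
        using B by (auto simp: U_def V_def)
      have "(\<Prod>i\<in>{1..j}. qfactor (g (Suc i)) (Suc i \<notin> insert 1 (Suc ` B))) = G B"
        unfolding G_def by (rule prod.cong) (auto simp: Suc_mem_image)
      then show "F (insert 1 (Suc ` B)) = qfactor (g 1) False * G B"
        unfolding F_def prod_split1 by simp
    next
      fix A assume A: "A \<in> U - {A. 1 \<notin> A}"
      then have A1: "1 \<in> A" "A \<subseteq> {1..Suc j}" "card A = a" by (auto simp: U_def)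
      have A0: "0 \<notin> A - {1}" using A1 by auto
      show "insert 1 (Suc ` ((\<lambda>x. x - 1) ` (A - {1}))) = A"
        unfolding h1[OF A0] using A1 by blast
      show "(\<lambda>x. x - 1) ` (A - {1}) \<in> V (a - 1)"
      proof -
        have "(\<lambda>x. x - 1) ` (A - {1}) \<subseteq> {1..j}"
        proof
          fix y assume "y \<in> (\<lambda>x. x - 1) ` (A - {1})"
          then obtain x where x: "x \<in> A" "x \<noteq> 1" "y = x - 1" by blast
          then have "x \<in> {1..Suc j}" using A1 by auto
          then show "y \<in> {1..j}" using x by auto
        qed
        moreover have "card ((\<lambda>x. x - 1) ` (A - {1})) = a - 1"
          using h2[OF A0] A1 by (simp add: card_Diff_singleton)
        ultimately show ?thesis by (simp add: V_def)
      qed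
    qed
    then show ?thesis using False by (simp add: WS sum_distrib_left)
  qed
  finally show ?thesis .
qed

lemma q_zero: "\<not> (1 \<le> k \<and> j \<le> k \<and> a \<le> j) \<Longrightarrow> q k j a = 0"
proof -
  assume h: "\<not> (1 \<le> k \<and> j \<le> k \<and> a \<le> j)"
  show ?thesis
  proof (cases "j = 0 \<or> a > j")
    case True then show ?thesis unfolding q_def by (rule if_P)
  next
    case False
    then have "k < j" using h by auto
    have cardle: "card S \<le> k" if "S \<subseteq> {1..k}" for S
    proof -
      have "card S \<le> card {1..k}" by (rule card_mono) (use that in auto)
      then show ?thesis by simp
    qed
    have "False" if "S \<subseteq> {1..k}" "card S = j" for S
      using cardle[OF that(1)] that(2) \<open>k < j\<close> by simp
    then have emp: "{S. S \<subseteq> {1..k} \<and> card S = j} = {}"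
      by blast
    show ?thesis unfolding q_def emp by simp
  qed
qed

definition hp :: "nat \<Rightarrow> nat \<Rightarrow> real poly" where
  "hp a i = (if i = 0 then 0 else qfactor i (a = 0))"

lemma Wf_1: "Wf 1 g a = (if a = 0 then qfactor (g 1) True else if a = 1 then qfactor (g 1) False else 0)"
  using Wf_Suc[of 0 g a] by (simp add: Wf_0)

lemma gap_single: "gap k {s} 1 = k"
  by (simp add: gap_def)

lemma Sets_1: "Sets k 1 = (\<lambda>s. {s}) ` {1..k}"
  by (auto simp: Sets_def card_Suc_eq)

lemma q1: "q k 1 a = of_nat k * (if a \<le> 1 then hp a k else 0)"
proof (cases "a \<le> 1")
  case False
  then show ?thesis unfolding q_def by simp
next
  case True
  have "q k 1 a = (\<Sum>S\<in>Sets k 1. Wf 1 (gap k S) a)" by (simp add: q_W)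
  also have "\<dots> = (\<Sum>s\<in>{1..k}. Wf 1 (gap k {s}) a)"
    unfolding Sets_1 by (subst sum.reindex) (auto simp: inj_on_def)
  also have "\<dots> = (\<Sum>s\<in>{1..k}. qfactor k (a = 0))"
  proof (intro sum.cong refl)
    fix s assume "s \<in> {1..k}"
    have "Wf 1 (gap k {s}) a = (if a = 0 then qfactor (gap k {s} 1) True else if a = 1 then qfactor (gap k {s} 1) False else 0)"
      by (rule Wf_1)
    then show "Wf 1 (gap k {s}) a = qfactor k (a = 0)" using True unfolding gap_single by auto
  qed
  also have "\<dots> = of_nat k * (if a \<le> 1 then hp a k else 0)"
    using True by (simp add: hp_def)
  finally show ?thesis .
qed

lemma sum_hp: "j \<ge> 1 \<Longrightarrow> (\<Sum>i=0..k. hp c i * q (k-i) j b) = (\<Sum>p\<in>{1..<k}. qfactor p (c = 0) * q (k-p) j b)"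
proof -
  assume j: "j \<ge> 1"
  have "(\<Sum>i=0..k. hp c i * q (k-i) j b) = (\<Sum>i\<in>{1..<k}. hp c i * q (k-i) j b)"
  proof (rule sum.mono_neutral_right)
    show "\<forall>i\<in>{0..k} - {1..<k}. hp c i * q (k - i) j b = 0"
    proof
      fix i assume "i \<in> {0..k} - {1..<k}"
      then have "i = 0 \<or> i = k" by auto
      then show "hp c i * q (k - i) j b = 0"
      proof
        assume "i = 0" then show ?thesis by (simp add: hp_def)
      next
        assume "i = k" then have "q (k - i) j b = 0" using j by (intro q_zero) simp
        then show ?thesis by simp
      qed
    qed
  qed auto
  also have "\<dots> = (\<Sum>p\<in>{1..<k}. qfactor p (c = 0) * q (k-p) j b)"
    by (rule sum.cong) (auto simp: hp_def)
  finally show ?thesis .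
qed

lemma comb: "q k (Suc j) a = (if j = 0 then of_nat k * (if a \<le> 1 then hp a k else 0) else 0)
   + (\<Sum>i=0..k. hp 0 i * q (k-i) j a) + (if a = 0 then 0 else (\<Sum>i=0..k. hp 1 i * q (k-i) j (a-1)))"
proof (cases "j = 0")
  case True
  have z: "q m 0 b = 0" for m b by (simp add: q_def)
  show ?thesis using q1[of k a] True by (simp add: z)
next
  case False
  then have j: "j \<ge> 1" by simp
  define \<Phi> where "\<Phi> p g = qfactor p True * Wf j g a + (if a = 0 then 0 else qfactor p False * Wf j g (a - 1))"
    for p and g :: "nat \<Rightarrow> nat"
  have "q k (Suc j) a = (\<Sum>S\<in>Sets k (Suc j). Wf (Suc j) (gap k S) a)" by (simp add: q_W)
  also have "\<dots> = (\<Sum>S\<in>Sets k (Suc j). \<Phi> (gap k S 1) (\<lambda>i. gap k S (Suc i)))"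
    by (simp only: Wf_Suc \<Phi>_def)
  also have "\<dots> = (\<Sum>p\<in>{1..<k}. \<Sum>S\<in>Sets (k-p) j. \<Phi> p (gap (k-p) S))"
  proof (rule Bij[OF j])
    fix p and g g' :: "nat \<Rightarrow> nat"
    assume "\<And>i. i \<in> {1..j} \<Longrightarrow> g i = g' i"
    then have "Wf j g b = Wf j g' b" for b by (rule Wf_cong)
    then show "\<Phi> p g = \<Phi> p g'" by (simp add: \<Phi>_def)
  qed
  also have "\<dots> = (\<Sum>p\<in>{1..<k}. qfactor p True * q (k-p) j a)
       + (if a = 0 then 0 else (\<Sum>p\<in>{1..<k}. qfactor p False * q (k-p) j (a-1)))"
    by (simp add: \<Phi>_def sum.distrib sum_distrib_left q_W False)
  also have "\<dots> = (\<Sum>i=0..k. hp 0 i * q (k-i) j a) + (if a = 0 then 0 else (\<Sum>i=0..k. hp 1 i * q (k-i) j (a-1)))"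
    using sum_hp[OF j, of 0 k a] sum_hp[OF j, of 1 k "a - 1"] by simp
  finally show ?thesis using False by simp
qed


definition P :: "nat \<Rightarrow> real poly" where "P p = (\<Sum>b<p. monom ((-1) ^ (p - 1 - b)) b)"

lemma qfactor_P: "qfactor p nA = P p + [:(-1) ^ p * (if nA then 1 else 0):]"
  by (simp add: qfactor_def P_def)

lemma P0[simp]: "P 0 = 0" by (simp add: P_def)

lemma P_Suc: "P (Suc k) + P k = monom 1 k"
proof -
  have "P (Suc k) = monom 1 k + (\<Sum>b<k. monom ((-1) ^ (k - b)) b)"
    by (simp add: P_def)
  moreover have "(\<Sum>b<k. monom ((-1) ^ (k - b)) b) + P k = 0"
  proof -
    have "(\<Sum>b<k. monom ((-1) ^ (k - b)) b) + P k = (\<Sum>b<k. monom ((-1) ^ (k - b) + (-1) ^ (k - 1 - b)) b)"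
      unfolding P_def by (simp only: sum.distrib[symmetric] add_monom)
    also have "\<dots> = 0"
    proof (rule sum.neutral, intro ballI)
      fix b assume "b \<in> {..<k}"
      then have "k - b = Suc (k - 1 - b)" by auto
      then show "monom ((-1::real) ^ (k - b) + (-1) ^ (k - 1 - b)) b = 0" by simp
    qed
    finally show ?thesis .
  qed
  ultimately show ?thesis by (simp add: algebra_simps)
qed

lemma P1[simp]: "P (Suc 0) = [:1:]"
  by (simp add: P_def monom_0 one_pCons)

definition hx :: "nat \<Rightarrow> real fps fps" where
  "hx a = Abs_fps (\<lambda>i. fps_of_poly (hp a i))"

definition kx :: "nat \<Rightarrow> real fps fps" where
  "kx a = fps_X * fps_deriv (hx a)"

abbreviation x2 :: "real fps fps" where "x2 \<equiv> fps_X"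
abbreviation w2 :: "real fps fps" where "w2 \<equiv> fps_const fps_X"
definition e2 :: "real fps fps" where "e2 = (1 - w2 * x2) * (1 + x2)"

lemma hx_nth: "hx a $ i = fps_of_poly (hp a i)" by (simp add: hx_def)

lemma fps_of_poly_of_nat: "fps_of_poly (of_nat n :: real poly) = of_nat n"
  by (induction n) (simp_all add: fps_of_poly_add)

lemma kx_nth: "kx a $ i = fps_of_poly (of_nat i * hp a i)"
  by (cases i) (simp_all add: kx_def hx_nth fps_of_poly_mult fps_of_poly_of_nat fps_of_poly_add)

lemma e2_mult: "e2 * h = h + x2 * h - w2 * (x2 * h) - w2 * (x2 * (x2 * h))"
  by (simp add: e2_def algebra_simps)

lemma fX_poly: "(fps_X :: real fps) = fps_of_poly (monom 1 1)"
  by (simp add: fps_of_poly_monom')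

lemma e2_h1: "e2 * hx 1 = x2"
proof (rule fps_ext)
  fix n
  show "(e2 * hx 1) $ n = x2 $ n"
  proof (cases n)
    case 0 then show ?thesis by (simp add: e2_mult hx_nth hp_def)
  next
    case (Suc m)
    show ?thesis
    proof (cases m)
      case 0 then show ?thesis using Suc by (simp add: e2_mult hx_nth hp_def qfactor_P)
    next
      case (Suc l)
      have A: "qfactor (Suc (Suc l)) False + qfactor (Suc l) False = monom 1 (Suc l)"
        by (simp add: qfactor_P P_Suc)
      have B: "qfactor (Suc l) False + hp 1 l = monom 1 l"
        by (cases l) (simp_all add: qfactor_P P_Suc hp_def)
      have "(e2 * hx 1) $ n = fps_of_poly (qfactor (Suc (Suc l)) False + qfactor (Suc l) False)
         - fps_X * fps_of_poly (qfactor (Suc l) False + hp 1 l)"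
        using Suc \<open>n = Suc m\<close> by (simp add: e2_mult hx_nth hp_def fps_of_poly_add algebra_simps)
      also have "\<dots> = 0" unfolding A B by (simp add: fps_of_poly_monom')
      finally show ?thesis using Suc \<open>n = Suc m\<close> by simp
    qed
  qed
qed

lemma qfT: "qfactor (Suc (Suc k)) True + qfactor (Suc k) True = monom 1 (Suc k)"
proof -
  have "qfactor (Suc (Suc k)) True + qfactor (Suc k) True = (P (Suc (Suc k)) + P (Suc k)) + [:(-1)^(Suc (Suc k)) + (-1) ^ Suc k:]"
    by (simp add: qfactor_P algebra_simps)
  also have "\<dots> = monom 1 (Suc k)" by (simp only: P_Suc) simp
  finally show ?thesis .
qed

lemma m1: "monom (1::real) (Suc 0) = [:0,1:]" by (simp add: monom_Suc monom_0)

lemma P2: "P 2 = monom 1 1 - 1"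
  using P_Suc[of 1] by (simp add: numeral_2_eq_2 one_pCons algebra_simps)

lemma e2_h0: "e2 * hx 0 = w2 * x2^2"
proof (rule fps_ext)
  fix n
  show "(e2 * hx 0) $ n = (w2 * x2^2) $ n"
  proof (cases "n \<le> 2")
    case True
    then have "n = 0 \<or> n = 1 \<or> n = 2" by auto
    moreover have "qfactor 2 True = monom 1 1" by (simp add: qfactor_P P2)
    ultimately show ?thesis
      by (auto simp: e2_mult hx_nth hp_def qfactor_P fps_of_poly_monom' numeral_2_eq_2 fps_X_power_nth m1)
  next
    case False
    then obtain l where n: "n = Suc (Suc (Suc l))" by (metis add_2_eq_Suc le_add_diff_inverse not_le_imp_less nat_le_linear Suc_leI less_imp_le_nat add_Suc_right add.commute)
    have "(e2 * hx 0) $ n = fps_of_poly (qfactor (Suc (Suc (Suc l))) True + qfactor (Suc (Suc l)) True)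
         - fps_X * fps_of_poly (qfactor (Suc (Suc l)) True + qfactor (Suc l) True)"
      using n by (simp add: e2_mult hx_nth hp_def fps_of_poly_add algebra_simps)
    also have "\<dots> = 0" unfolding qfT by (simp add: fps_of_poly_monom')
    finally show ?thesis using n by (simp add: fps_X_power_nth)
  qed
qed

lemma deriv_trick:
  fixes e h g :: "real fps fps"
  assumes "e * h = g"
  shows "e^2 * (fps_X * fps_deriv h) = fps_X * (e * fps_deriv g - fps_deriv e * g)"
proof -
  have d: "fps_deriv g = e * fps_deriv h + fps_deriv e * h"
    using assms[symmetric] by simp
  show ?thesis unfolding d assms[symmetric] by (simp add: algebra_simps power2_eq_square)
qed

lemma de2: "fps_deriv e2 = 1 - w2 - 2*w2*x2"
  by (simp add: e2_def algebra_simps)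

lemma e2_k1: "e2^2 * kx 1 = x2 * (1 + w2 * x2^2)"
  unfolding kx_def deriv_trick[OF e2_h1] de2
  by (simp add: e2_def algebra_simps power2_eq_square)

lemma e2_k0: "e2^2 * kx 0 = w2 * x2^2 * (2 + x2 - w2*x2)"
  unfolding kx_def deriv_trick[OF e2_h0] de2
  by (simp add: e2_def algebra_simps power2_eq_square)

definition C :: "real fps fps \<Rightarrow> fps4" where "C u = fps_const (fps_const u)"

lemma C_mult: "C (a * b) = C a * C b" by (simp add: C_def)
lemma C_add: "C (a + b) = C a + C b" by (simp add: C_def)
lemma C_diff: "C (a - b) = C a - C b" by (simp add: C_def)
lemma C_1: "C 1 = 1" by (simp add: C_def)
lemma C_pow: "C (a ^ n) = C a ^ n" by (simp add: C_def)
lemmas C_hom = C_mult C_add C_diff C_1 C_pow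

lemma fX_C: "fX = C x2" by (simp add: fX_def C_def)
lemma fW_C: "fW = C w2" by (simp add: fW_def C_def)

definition Hser :: fps4 where "Hser = C (hx 0) + fZ * C (hx 1)"
definition Kser :: fps4 where "Kser = C (kx 0) + fZ * C (kx 1)"
abbreviation E4 :: fps4 where "E4 \<equiv> C e2"

lemma E4_eq: "E4 = (1 - fW * fX) * (1 + fX)"
  by (simp add: e2_def fX_C fW_C C_hom)

lemma EH: "E4 * Hser = fW * fX^2 + fZ * fX"
proof -
  have "E4 * Hser = C (e2 * hx 0) + fZ * C (e2 * hx 1)"
    by (simp add: Hser_def C_hom algebra_simps)
  also have "\<dots> = C (w2 * x2^2) + fZ * C x2" by (simp only: e2_h0 e2_h1)
  finally show ?thesis by (simp only: C_hom fX_C fW_C)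
qed

lemma EK: "E4^2 * Kser = fW * fX^2 * (1 + 1 + fX - fW * fX) + fZ * (fX * (1 + fW * fX^2))"
proof -
  have "E4^2 * Kser = C (e2^2 * kx 0) + fZ * C (e2^2 * kx 1)"
    by (simp add: Kser_def C_hom algebra_simps)
  also have "\<dots> = C (w2 * x2^2 * (1 + 1 + x2 - w2*x2)) + fZ * C (x2 * (1 + w2 * x2^2))"
    by (simp only: e2_k0 e2_k1 one_add_one)
  finally show ?thesis by (simp only: C_hom fX_C fW_C)
qed

lemma Qser_nth: "Qser $ a $ j $ k = fps_of_poly (q k j a)"
  using q_zero[of k j a] by (auto simp: Qser_def)

lemma HQ_nth: "(Hser * Qser) $ a $ j $ k = fps_of_poly ((\<Sum>i=0..k. hp 0 i * q (k-i) j a) + (if a = 0 then 0 else (\<Sum>i=0..k. hp 1 i * q (k-i) j (a-1))))"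
proof -
  have "Hser * Qser = C (hx 0) * Qser + fZ * (C (hx 1) * Qser)"
    by (simp add: Hser_def algebra_simps)
  then have "(Hser * Qser) $ a $ j $ k = (hx 0 * Qser $ a $ j) $ k + (if a = 0 then 0 else (hx 1 * Qser $ (a-1) $ j) $ k)"
    by (simp add: C_def fZ_def)
  also have "\<dots> = fps_of_poly ((\<Sum>i=0..k. hp 0 i * q (k-i) j a) + (if a = 0 then 0 else (\<Sum>i=0..k. hp 1 i * q (k-i) j (a-1))))"
    by (simp add: fps_mult_nth hx_nth Qser_nth fps_of_poly_add fps_of_poly_sum fps_of_poly_mult)
  finally show ?thesis .
qed

lemma K_nth: "Kser $ a $ j = (if j = 0 then (if a = 0 then kx 0 else if a = 1 then kx 1 else 0) else 0)"
  by (simp add: Kser_def C_def fZ_def)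

lemma rec: "Qser = fY * Kser + fY * (Hser * Qser)"
proof (rule fps_ext, rule fps_ext, rule fps_ext)
  fix a j k
  show "Qser $ a $ j $ k = (fY * Kser + fY * (Hser * Qser)) $ a $ j $ k"
  proof (cases j)
    case 0 then show ?thesis by (simp add: fY_def Qser_nth q_def)
  next
    case (Suc j')
    have "(fY * Kser + fY * (Hser * Qser)) $ a $ j $ k = Kser $ a $ j' $ k + (Hser * Qser) $ a $ j' $ k"
      using Suc by (simp add: fY_def)
    also have "\<dots> = fps_of_poly (q k j a)"
    proof -
      have "Kser $ a $ j' $ k = fps_of_poly (if j' = 0 then of_nat k * (if a \<le> 1 then hp a k else 0) else 0)"
        by (auto simp: K_nth kx_nth)
      then show ?thesis unfolding HQ_nth Suc comb by (simp add: fps_of_poly_add)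
    qed
    finally show ?thesis by (simp add: Qser_nth)
  qed
qed

lemma fps_mult_inverse_right:
  fixes f :: "'a::{ring_1,inverse} fps"
  assumes "f $ 0 * inverse (f $ 0) = 1"
  shows "f * inverse f = 1"
  using fps_right_inverse[OF assms] by (simp add: fps_inverse_def)

definition D4 :: fps4 where "D4 = (fW * fX^2 * fY + fW * fX^2 + fX * fY * fZ + fW * fX - fX - 1)
               * (fW * fX - 1) * (fX + 1)"

lemma D4_inv: "D4 * inverse D4 = 1"
proof -
  have "D4 $ 0 $ 0 $ 0 $ 0 = 1"
    by (simp add: D4_def fW_def fX_def fY_def fZ_def)
  then show ?thesis
    by (intro fps_mult_inverse_right) simp
qed

theorem propositionB5:
  shows "Qser =
    fX * fY * (- (fW^2 * fX^2) + fW * fX^2 * fZ + fW * fX^2 + 2 * fW * fX + fZ)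
    * inverse ((fW * fX^2 * fY + fW * fX^2 + fX * fY * fZ + fW * fX - fX - 1)
               * (fW * fX - 1) * (fX + 1))"
proof -
  have QD: "Qser * D4 = fX * fY * (- (fW^2 * fX^2) + fW * fX^2 * fZ + fW * fX^2 + 2 * fW * fX + fZ)"
  proof -
    have D0: "D4 = (E4 - fY * (fW * fX^2 + fZ * fX)) * E4"
      unfolding E4_eq D4_def by (simp add: algebra_simps power2_eq_square)
    have D: "D4 = (E4 - fY * (E4 * Hser)) * E4"
      unfolding EH by (rule D0)
    have "Qser * D4 = (Qser - fY * (Hser * Qser)) * E4^2"
      unfolding D by (simp add: algebra_simps power2_eq_square)
    also have "\<dots> = fY * (E4^2 * Kser)"
    proof -
      have h: "Qser - fY * (Hser * Qser) = fY * Kser"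
        using rec by (metis add_diff_cancel_right')
      show ?thesis unfolding h by (simp only: mult_ac)
    qed
    also have "\<dots> = fX * fY * (- (fW^2 * fX^2) + fW * fX^2 * fZ + fW * fX^2 + 2 * fW * fX + fZ)"
      unfolding EK by (simp add: algebra_simps power2_eq_square)
    finally show ?thesis .
  qed
  have "Qser = Qser * (D4 * inverse D4)" by (simp add: D4_inv)
  also have "\<dots> = (Qser * D4) * inverse D4" by (simp add: mult.assoc)
  finally show ?thesis unfolding QD by (simp add: D4_def)
qed

end
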